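(* Let $\xi_0,\dots,\xi_{m-1}\in\mathbb{Q}_p$. If $\sum_{j=0}^{m-1}\chi(\xi_j)=0$, then $p$ divides $m$ and $\sum_{j=0}^{m-1}\chi(x\xi_j)=0$ for every $x\in\mathbb{Z}_p^\times$.
   Context: $p\ge2$ is a prime and $\mathbb{Z}_p^\times=\{x\in\mathbb{Q}_p:|x|_p=1\}$ is the group of units of $\mathbb{Z}_p$. Characters: $\chi(x)=e^{2\pi i\{x\}}$, where $\{x\}=\sum_{n=v_p(x)}^{-1}a_np^n$ is the fractional part of $x=\sum_{n\ge v_p(x)}a_np^n$ with digits $a_n\in\{0,\dots,p-1\}$. *)

theory Defs
  imports Complex_Main "HOL-Computational_Algebra.Primes"
begin

text \<open>p-adic integers as the inverse limit of Z/p^n Z: a compatible sequence of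
  residues a n in {0..<p^n} (a n = the first n digits of the p-adic expansion).\<close>
definition Zp :: "nat \<Rightarrow> (nat \<Rightarrow> int) set" where
  "Zp p = {a. \<forall>n. 0 \<le> a n \<and> a n < int p ^ n \<and> a (Suc n) mod (int p ^ n) = a n}"

text \<open>Units of Z_p: elements of absolute value 1, i.e. not divisible by p.\<close>
definition Zp_units :: "nat \<Rightarrow> (nat \<Rightarrow> int) set" where
  "Zp_units p = {a \<in> Zp p. a 1 \<noteq> 0}"

text \<open>Q_p = Z_p[1/p]: a pair (k, a) represents the p-adic number a / p^k.\<close>
definition Qp :: "nat \<Rightarrow> (nat \<times> (nat \<Rightarrow> int)) set" where
  "Qp p = {(k, a). a \<in> Zp p}"

definition zp_mult :: "nat \<Rightarrow> (nat \<Rightarrow> int) \<Rightarrow> (nat \<Rightarrow> int) \<Rightarrow> (nat \<Rightarrow> int)" where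
  "zp_mult p x a = (\<lambda>n. (x n * a n) mod (int p ^ n))"

definition qp_scale :: "nat \<Rightarrow> (nat \<Rightarrow> int) \<Rightarrow> nat \<times> (nat \<Rightarrow> int) \<Rightarrow> nat \<times> (nat \<Rightarrow> int)" where
  "qp_scale p x \<xi> = (fst \<xi>, zp_mult p x (snd \<xi>))"

text \<open>Fractional part {a/p^k} = (a mod p^k)/p^k = (a k)/p^k, i.e. the sum of the
  digits of negative index times the corresponding powers of p.\<close>
definition qp_frac :: "nat \<Rightarrow> nat \<times> (nat \<Rightarrow> int) \<Rightarrow> real" where
  "qp_frac p \<xi> = real_of_int (snd \<xi> (fst \<xi>)) / real p ^ fst \<xi>"

definition chi :: "nat \<Rightarrow> nat \<times> (nat \<Rightarrow> int) \<Rightarrow> complex" where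
  "chi p \<xi> = cis (2 * pi * qp_frac p \<xi>)"

end

theory Submission imports Defs "HOL-Computational_Algebra.Polynomial" begin

definition Phi :: "nat \<Rightarrow> nat \<Rightarrow> int poly" where
  "Phi p e = (\<Sum>k<p. monom 1 (k*e))"

lemma Phi_tele: "Phi p e * (monom 1 e - 1) = monom 1 (p*e) - 1"
proof -
  have "Phi p e * (monom 1 e - 1) = (\<Sum>k<p. monom 1 (Suc k * e) - monom 1 (k*e))"
    unfolding Phi_def sum_distrib_right
    by (rule sum.cong) (auto simp: algebra_simps mult_monom)
  also have "\<dots> = monom 1 (p*e) - 1"
    by (subst sum_lessThan_telescope) (simp add: monom_0 one_pCons)
  finally show ?thesis .
qed

lemma dvd_coeff: "[:int p:] dvd f \<Longrightarrow> int p dvd coeff f i"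
  by (auto elim!: dvdE simp: coeff_smult)

lemma binom_mod_p:
  assumes "prime p"
  shows "[:int p:] dvd (Y + 1) ^ p - Y ^ p - (1::int poly)"
proof -
  have "(Y + 1) ^ p = (\<Sum>k\<le>p. of_nat (p choose k) * Y ^ k * 1 ^ (p - k))"
    by (rule binomial_ring)
  also have "\<dots> = (\<Sum>k\<in>{1..<p}. of_nat (p choose k) * Y ^ k) + Y ^ p + 1"
  proof -
    have p0: "p > 0" using assms prime_gt_0_nat by blast
    have "{..p} = insert 0 (insert p {1..<p})" using p0 by auto
    then show ?thesis using p0 by (simp add: add_ac)
  qed
  finally have eq: "(Y + 1) ^ p - Y ^ p - 1 = (\<Sum>k\<in>{1..<p}. of_nat (p choose k) * Y ^ k)"
    by simp
  show ?thesis unfolding eq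
  proof (rule dvd_sum)
    fix k assume k: "k \<in> {1..<p}"
    then have "p dvd (p choose k)" using assms by (intro dvd_choose_prime) auto
    then obtain c where c: "p choose k = p * c" by blast
    have "(of_nat (p choose k) :: int poly) = [:int p:] * of_nat c"
      by (simp add: c of_nat_poly)
    then show "[:int p:] dvd of_nat (p choose k) * Y ^ k"
      by (metis dvd_triv_left mult.assoc)
  qed
qed

lemma dvd_power_diff_poly:
  fixes A B c :: "'a::comm_ring_1"
  assumes "c dvd A - B" shows "c dvd A ^ n - B ^ n"
  using assms by (simp add: power_diff_sumr2)

lemma frob_poly:
  assumes "prime p"
  shows "[:int p:] dvd [:1,1:] ^ (p ^ k) - monom 1 (p ^ k) - 1"
proof (induction k)
  case 0
  then show ?case by (simp add: monom_altdef one_pCons)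
next
  case (Suc k)
  let ?A = "[:1,1::int:] ^ (p ^ k)" and ?Y = "monom (1::int) (p ^ k)"
  have "[:int p:] dvd ?A - (?Y + 1)" using Suc by (simp add: algebra_simps)
  then have h1: "[:int p:] dvd ?A ^ p - (?Y + 1) ^ p" by (rule dvd_power_diff_poly)
  have h2: "[:int p:] dvd (?Y + 1) ^ p - ?Y ^ p - 1" by (rule binom_mod_p[OF assms])
  have "?Y ^ p = monom 1 (p ^ Suc k)"
    by (simp add: monom_altdef power_mult[symmetric] mult.commute)
  moreover have "[:1,1::int:] ^ (p ^ Suc k) = ?A ^ p"
    by (simp add: power_mult[symmetric] mult.commute)
  ultimately have "[:1,1:] ^ (p ^ Suc k) - monom 1 (p ^ Suc k) - 1
     = (?A ^ p - (?Y + 1) ^ p) + ((?Y + 1) ^ p - ?Y ^ p - 1)" by simp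
  moreover have "[:int p:] dvd (?A ^ p - (?Y + 1) ^ p) + ((?Y + 1) ^ p - ?Y ^ p - 1)"
    using h1 h2 by (rule dvd_add)
  ultimately show ?case by metis
qed

lemma pcompose_monom1: "pcompose (monom (1::'a::comm_semiring_1) j) q = q ^ j"
  by (induction j) (simp_all add: monom_altdef pcompose_mult pcompose_pCons pcompose_1)

lemma deg_monom_minus1:
  assumes "j > 0" shows "degree (monom 1 j - 1 :: int poly) = j"
   and "lead_coeff (monom 1 j - 1 :: int poly) = 1"
proof -
  have "degree (monom 1 j - 1 :: int poly) \<le> j"
    by (rule degree_diff_le) (auto simp: degree_monom_eq)
  moreover have "coeff (monom 1 j - 1 :: int poly) j = 1" using assms by (simp add: coeff_1)
  ultimately show d: "degree (monom 1 j - 1 :: int poly) = j"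
    by (metis le_antisym le_degree zero_neq_one)
  show "lead_coeff (monom 1 j - 1 :: int poly) = 1"
    unfolding d using assms by (simp add: coeff_1)
qed

lemma Phi_degree:
  assumes "p > 0" "e > 0"
  shows "degree (Phi p e) = p*e - e" "lead_coeff (Phi p e) = 1" "Phi p e \<noteq> 0"
proof -
  have pe: "p*e > 0" using assms by simp
  have nz: "monom 1 (p*e) - 1 \<noteq> (0::int poly)"
    using deg_monom_minus1[OF pe] by auto
  then show ne: "Phi p e \<noteq> 0" using Phi_tele[of p e] by auto
  have ne2: "monom 1 e - 1 \<noteq> (0::int poly)" using deg_monom_minus1[OF assms(2)] by auto
  have "degree (Phi p e) + e = p*e"
    using degree_mult_eq[OF ne ne2] Phi_tele[of p e] deg_monom_minus1[OF pe] deg_monom_minus1[OF assms(2)]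
    by simp
  then show "degree (Phi p e) = p*e - e" by simp
  show "lead_coeff (Phi p e) = 1"
    using lead_coeff_mult[of "Phi p e" "monom 1 e - 1"] Phi_tele[of p e]
      deg_monom_minus1[OF pe] deg_monom_minus1[OF assms(2)] by simp
qed

lemma poly_Phi_1: "poly (Phi p e) 1 = int p"
  by (simp add: Phi_def poly_sum poly_monom)

definition Psi :: "nat \<Rightarrow> nat \<Rightarrow> int poly" where
  "Psi p e = pcompose (Phi p e) [:1,1:]"

lemma Psi_props:
  fixes n :: nat
  assumes "prime p"
  defines "e \<equiv> p ^ n"
  shows "degree (Psi p e) = p*e - e" "lead_coeff (Psi p e) = 1" "coeff (Psi p e) 0 = int p"
    "\<And>i. i < p*e - e \<Longrightarrow> int p dvd coeff (Psi p e) i"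
proof -
  have p0: "p > 0" using assms prime_gt_0_nat by blast
  have e0: "e > 0" using p0 by (simp add: e_def)
  show "degree (Psi p e) = p*e - e" unfolding Psi_def
    by (simp add: degree_pcompose Phi_degree[OF p0 e0])
  show "lead_coeff (Psi p e) = 1" unfolding Psi_def
    using Phi_degree[OF p0 e0] by (subst lead_coeff_comp) simp_all
  show "coeff (Psi p e) 0 = int p" unfolding Psi_def
    by (simp add: poly_Phi_1)
  let ?X1 = "[:1,1::int:]" and ?P = "Psi p e"
  have tele: "?P * (?X1 ^ e - 1) = ?X1 ^ (p*e) - 1"
    using arg_cong[OF Phi_tele[of p e], of "\<lambda>f. pcompose f ?X1"]
    by (simp add: Psi_def pcompose_mult pcompose_diff pcompose_monom1 pcompose_1)
  have f1: "[:int p:] dvd ?X1 ^ e - monom 1 e - 1" unfolding e_def by (rule frob_poly[OF assms(1)])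
  have f2: "[:int p:] dvd ?X1 ^ (p*e) - monom 1 (p*e) - 1" unfolding e_def
    using frob_poly[OF assms(1), of "Suc n"] by simp
  have "?P * monom 1 e - monom 1 (p*e) = ?P * (-(?X1 ^ e - monom 1 e - 1)) + (?X1 ^ (p*e) - monom 1 (p*e) - 1)"
    using tele by (simp add: algebra_simps)
  moreover have "[:int p:] dvd ?P * (-(?X1 ^ e - monom 1 e - 1)) + (?X1 ^ (p*e) - monom 1 (p*e) - 1)"
    using f1 f2 by (intro dvd_add dvd_mult dvd_minus_iff[THEN iffD2])
  ultimately have D: "[:int p:] dvd ?P * monom 1 e - monom 1 (p*e)" by metis
  fix i assume i: "i < p*e - e"
  have "int p dvd coeff (?P * monom 1 e - monom 1 (p*e)) (i + e)" by (rule dvd_coeff[OF D])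
  moreover have "coeff (?P * monom 1 e - monom 1 (p*e)) (i + e) = coeff ?P i"
    using i by (simp add: mult.commute[of ?P] coeff_monom_mult)
  ultimately show "int p dvd coeff ?P i" by simp
qed

lemma eisenstein_aux:
  fixes A B C :: "int poly" and q :: int
  assumes q: "prime q" and AB: "A * B = C"
    and low: "\<And>i. i < degree C \<Longrightarrow> q dvd coeff C i"
    and c0: "\<not> q^2 dvd coeff C 0" and lc: "\<not> q dvd lead_coeff C"
    and dA: "degree A \<ge> 1" and dB: "degree B \<ge> 1" and a0: "q dvd coeff A 0"
  shows False
proof -
  have A0: "A \<noteq> 0" and B0: "B \<noteq> 0" using dA dB by auto
  have c0eq: "coeff C 0 = coeff A 0 * coeff B 0" using AB[symmetric] by (simp add: coeff_mult)
  have b0: "\<not> q dvd coeff B 0"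
  proof
    assume "q dvd coeff B 0"
    then have "q*q dvd coeff A 0 * coeff B 0" using a0 by (rule mult_dvd_mono[rotated])
    then show False using c0 c0eq by (simp add: power2_eq_square)
  qed
  have degC: "degree C = degree A + degree B" using AB degree_mult_eq[OF A0 B0] by simp
  have "lead_coeff C = lead_coeff A * lead_coeff B" using AB lead_coeff_mult[of A B] by simp
  then have la: "\<not> q dvd lead_coeff A" using lc by (metis dvd_mult2)
  define i where "i = (LEAST i. \<not> q dvd coeff A i)"
  have ai: "\<not> q dvd coeff A i" unfolding i_def using la by (rule LeastI)
  have ile: "i \<le> degree A" unfolding i_def using la by (rule Least_le)
  have below: "\<And>j. j < i \<Longrightarrow> q dvd coeff A j" unfolding i_def using not_less_Least by blast
  have ilt: "i < degree C" using ile dB degC by simp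
  have "coeff C i = (\<Sum>j\<le>i. coeff A j * coeff B (i-j))" using AB[symmetric] by (simp add: coeff_mult)
  also have "\<dots> = coeff A i * coeff B 0 + (\<Sum>j<i. coeff A j * coeff B (i-j))"
  proof -
    have "{..i} = insert i {..<i}" by auto
    then show ?thesis by simp
  qed
  finally have eq: "coeff A i * coeff B 0 = coeff C i - (\<Sum>j<i. coeff A j * coeff B (i-j))" by simp
  have "q dvd (\<Sum>j<i. coeff A j * coeff B (i-j))"
    by (rule dvd_sum) (simp add: below)
  then have "q dvd coeff A i * coeff B 0" unfolding eq using low[OF ilt] by simp
  then show False using ai b0 q by (simp add: prime_dvd_mult_iff)
qed

lemma Phi_irred:
  fixes n :: nat
  assumes p: "prime p" and AB: "A * B = Phi p (p^n)" and dA: "degree A \<ge> 1" and dB: "degree B \<ge> 1"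
  shows False
proof -
  let ?e = "p^n"
  let ?A = "pcompose A [:1,1:]" and ?B = "pcompose B [:1,1:]"
  have AB': "?A * ?B = Psi p ?e" unfolding Psi_def AB[symmetric] by (simp add: pcompose_mult)
  have dA': "degree ?A \<ge> 1" and dB': "degree ?B \<ge> 1" using dA dB by (simp_all add: degree_pcompose)
  have q: "prime (int p)" using p by simp
  note P = Psi_props[OF p, of n]
  have low: "\<And>i. i < degree (Psi p ?e) \<Longrightarrow> int p dvd coeff (Psi p ?e) i"
    using P(1) by (intro Psi_props(4)[OF p]) simp
  have c0: "\<not> (int p)^2 dvd coeff (Psi p ?e) 0"
  proof
    assume "(int p)^2 dvd coeff (Psi p ?e) 0"
    then have "int p * int p dvd int p * 1" using P by (simp add: power2_eq_square)
    then have "int p dvd 1" using p by (subst (asm) dvd_mult_cancel_left) (auto simp: prime_gt_0_nat)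
    then show False using q by (simp add: prime_int_iff)
  qed
  have lc: "\<not> int p dvd lead_coeff (Psi p ?e)" using P q by (simp add: prime_int_iff)
  have c0eq: "coeff (Psi p ?e) 0 = coeff ?A 0 * coeff ?B 0" using AB'[symmetric] by (simp add: coeff_mult)
  then have "int p dvd coeff ?A 0 * coeff ?B 0" using P by simp
  then have "int p dvd coeff ?A 0 \<or> int p dvd coeff ?B 0" using q by (simp add: prime_dvd_mult_iff)
  then show False
  proof
    assume "int p dvd coeff ?A 0"
    then show False using eisenstein_aux[OF q AB' low c0 lc dA' dB'] by blast
  next
    assume "int p dvd coeff ?B 0"
    moreover have "?B * ?A = Psi p ?e" using AB' by (simp add: mult.commute)
    ultimately show False using eisenstein_aux[OF q _ low c0 lc dB' dA'] by blast
  qed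
qed


definition ev :: "complex \<Rightarrow> int poly \<Rightarrow> complex" where
  "ev z R = poly (map_poly of_int R) z"

lemma ev_mult: "ev z (A * B) = ev z A * ev z B"
proof -
  have "map_poly (of_int :: int \<Rightarrow> complex) (A * B) = map_poly of_int A * map_poly of_int B"
    by (rule poly_eqI) (simp add: coeff_map_poly coeff_mult of_int_sum)
  then show ?thesis by (simp add: ev_def)
qed

lemma ev_add: "ev z (A + B) = ev z A + ev z B"
proof -
  have "map_poly (of_int :: int \<Rightarrow> complex) (A + B) = map_poly of_int A + map_poly of_int B"
    by (rule poly_eqI) (simp add: coeff_map_poly)
  then show ?thesis by (simp add: ev_def)
qed

lemma ev_diff: "ev z (A - B) = ev z A - ev z B"
proof -
  have "map_poly (of_int :: int \<Rightarrow> complex) (A - B) = map_poly of_int A - map_poly of_int B"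
    by (rule poly_eqI) (simp add: coeff_map_poly)
  then show ?thesis by (simp add: ev_def)
qed

lemma ev_smult: "ev z (smult c A) = of_int c * ev z A"
  by (simp add: ev_def map_poly_smult)

lemma ev_const: "ev z [:c:] = of_int c"
  by (simp add: ev_def map_poly_pCons)

lemma content_Phi:
  assumes "prime p" shows "content (Phi p (p^n)) = 1"
proof -
  have p0: "p > 0" using assms prime_gt_0_nat by blast
  have "content (Phi p (p^n)) dvd lead_coeff (Phi p (p^n))" by (rule content_dvd_coeff)
  moreover have "lead_coeff (Phi p (p^n)) = 1" using Phi_degree[OF p0, of "p^n"] p0 by simp
  ultimately have "content (Phi p (p^n)) dvd 1" by metis
  then have "\<bar>content (Phi p (p^n))\<bar> = 1" by simp
  moreover have "content (Phi p (p^n)) \<ge> 0"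
    using normalize_content[of "Phi p (p^n)"] by (simp add: abs_of_nonneg)
  ultimately show ?thesis by simp
qed

lemma minpoly_deg:
  assumes p: "prime p" and z: "ev z (Phi p (p^n)) = 0"
  shows "R \<noteq> 0 \<Longrightarrow> ev z R = 0 \<Longrightarrow> degree R \<ge> p * p^n - p^n"
proof (induction "degree R" arbitrary: R rule: less_induct)
  case less
  let ?F = "Phi p (p^n)"
  have p0: "p > 0" using p prime_gt_0_nat by blast
  have e0: "p^n > 0" using p0 by simp
  note PD = Phi_degree[OF p0 e0]
  obtain q r where qr: "pseudo_divmod ?F R = (q, r)" by (metis surj_pair)
  define c where "c = coeff R (degree R) ^ (Suc (degree ?F) - degree R)"
  have c0: "c \<noteq> 0" using less.prems by (simp add: c_def)
  have eq: "smult c ?F = R * q + r" using pseudo_divmod(1)[OF less.prems(1) qr] by (simp add: c_def)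
  have rdeg: "r = 0 \<or> degree r < degree R" using pseudo_divmod(2)[OF less.prems(1) qr] .
  have evr: "ev z r = 0"
    using arg_cong[OF eq, of "ev z"] z less.prems(2) by (simp add: ev_smult ev_add ev_mult)
  show ?case
  proof (cases "r = 0")
    case False
    with rdeg have "degree r < degree R" by simp
    with less.hyps[OF this False evr] show ?thesis by simp
  next
    case True
    with eq have eq2: "smult c ?F = R * q" by simp
    have "content (smult c ?F) = \<bar>c\<bar>" using content_Phi[OF p, of n] by simp
    also have "content (smult c ?F) = content R * content q" by (simp add: eq2 content_mult)
    finally have cc: "content R * content q = \<bar>c\<bar>" .
    have "R * q = smult (content R * content q) (primitive_part R * primitive_part q)"
      by (metis content_times_primitive_part mult_smult_left mult_smult_right smult_smult)
    then have "smult c ?F = smult \<bar>c\<bar> (primitive_part R * primitive_part q)" using eq2 cc by simp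
    also have "\<dots> = smult c (smult (sgn c) (primitive_part R * primitive_part q))"
      by (simp add: abs_sgn mult.commute)
    finally have "smult c (?F - smult (sgn c) (primitive_part R * primitive_part q)) = 0"
      by (simp add: smult_diff_right)
    then have "?F = primitive_part R * smult (sgn c) (primitive_part q)"
      using c0 by simp
    define B where "B = smult (sgn c) (primitive_part q)"
    have FB: "primitive_part R * B = ?F" unfolding B_def using \<open>?F = _\<close> by simp
    have dR: "degree (primitive_part R) \<ge> 1"
    proof (rule ccontr)
      assume "\<not> 1 \<le> degree (primitive_part R)"
      then have "degree R = 0" by simp
      then obtain a where "R = [:a:]" by (metis degree_eq_zeroE)
      then show False using less.prems by (simp add: ev_const)
    qed
    have "degree B = 0"
    proof (rule ccontr)
      assume "degree B \<noteq> 0"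
      then show False using Phi_irred[OF p FB dR] by simp
    qed
    moreover have "B \<noteq> 0" using FB PD(3) by auto
    moreover have "primitive_part R \<noteq> 0" using less.prems by simp
    ultimately have "degree ?F = degree R" using FB degree_mult_eq[of "primitive_part R" B] by simp
    then show ?thesis using PD by simp
  qed
qed

lemma Phi_divides:
  assumes p: "prime p" and z: "ev z (Phi p (p^n)) = 0" and P: "ev z P = 0"
  shows "\<exists>Q. P = Phi p (p^n) * Q"
proof -
  let ?F = "Phi p (p^n)"
  have p0: "p > 0" using p prime_gt_0_nat by blast
  have e0: "p^n > 0" using p0 by simp
  note PD = Phi_degree[OF p0 e0]
  obtain q r where qr: "pseudo_divmod P ?F = (q, r)" by (metis surj_pair)
  have eq: "P = ?F * q + r" using pseudo_divmod(1)[OF PD(3) qr] PD by simp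
  have rdeg: "r = 0 \<or> degree r < degree ?F" using pseudo_divmod(2)[OF PD(3) qr] .
  have evr: "ev z r = 0"
    using arg_cong[OF eq, of "ev z"] z P by (simp add: ev_add ev_mult)
  have "r = 0"
  proof (rule ccontr)
    assume "r \<noteq> 0"
    then show False using minpoly_deg[OF p z _ evr] rdeg PD by simp
  qed
  then show ?thesis using eq by auto
qed


lemma ev_0 [simp]: "ev z 0 = 0" by (simp add: ev_def)

lemma ev_sum: "ev z (sum f A) = (\<Sum>a\<in>A. ev z (f a))"
  by (induction A rule: infinite_finite_induct) (simp_all add: ev_add)

lemma ev_monom: "ev z (monom 1 j) = z ^ j"
  by (simp add: ev_def map_poly_monom poly_monom)

lemma cis_pow: "cis a ^ k = cis (real k * a)"
  by (rule DeMoivre)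

lemma cis_int_ne1:
  assumes "M > 0" "\<not> int M dvd y"
  shows "cis (2 * pi * real_of_int y / real M) \<noteq> 1"
proof
  assume "cis (2 * pi * real_of_int y / real M) = 1"
  then have "cos (2 * pi * real_of_int y / real M) = 1" by (simp add: complex_eq_iff)
  then obtain t :: int where t: "2 * pi * real_of_int y / real M = real_of_int t * 2 * pi"
    by (subst (asm) cos_one_2pi_int) blast
  then have "real_of_int y = real_of_int (t * int M)" using assms(1)
    by (simp add: field_simps)
  then have "y = t * int M" by (simp only: of_int_eq_iff)
  then show False using assms(2) by simp
qed

lemma cis_int_mod:
  assumes "M > 0" "y mod int M = y' mod int M"
  shows "cis (2 * pi * real_of_int y / real M) = cis (2 * pi * real_of_int y' / real M)"
proof -
  obtain t where t: "y = y' + int M * t"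
    using assms(2) by (metis mod_eqE)
  have "2 * pi * real_of_int y / real M = 2 * pi * real_of_int y' / real M + 2 * pi * real_of_int t"
    using assms(1) by (simp add: t field_simps)
  then have "cis (2 * pi * real_of_int y / real M) = cis (2 * pi * real_of_int y' / real M) * cis (2 * pi * real_of_int t)"
    by (simp only: cis_mult)
  moreover have "cis (2 * pi * real_of_int t) = 1" by (rule cis_multiple_2pi) simp
  ultimately show ?thesis by simp
qed

lemma ev_Phi_root:
  assumes p: "prime p" and x: "\<not> p dvd x"
  shows "ev (cis (2 * pi / real (p * p^n)) ^ x) (Phi p (p^n)) = 0"
proof -
  have p0: "p > 0" using p prime_gt_0_nat by blast
  define u where "u = cis (2 * pi * real_of_int (int x) / real p)"
  define w where "w = cis (2 * pi / real (p * p^n)) ^ x"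
  have w: "w ^ (p^n) = u"
    unfolding w_def u_def power_mult[symmetric] cis_pow using p0 by (simp add: field_simps)
  have wk: "w ^ (k * p^n) = u ^ k" for k by (metis w mult.commute power_mult)
  have "ev w (Phi p (p^n)) = (\<Sum>k<p. u ^ k)"
    unfolding Phi_def ev_sum ev_monom wk by simp
  then have "ev (cis (2 * pi / real (p * p^n)) ^ x) (Phi p (p^n)) = (\<Sum>k<p. u ^ k)"
    by (simp add: w_def)
  also have "\<dots> = (u ^ p - 1) / (u - 1)"
  proof (rule geometric_sum)
    show "u \<noteq> 1" unfolding u_def using p0 x by (intro cis_int_ne1) auto
  qed
  also have "u ^ p = 1" unfolding u_def cis_pow using p0 by simp
  finally show ?thesis by simp
qed

lemma Zp_mod:
  assumes "a \<in> Zp p" "k \<le> N"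
  shows "a N mod (int p ^ k) = a k"
  using assms(2)
proof (induction N rule: dec_induct)
  case base
  have "0 \<le> a k" "a k < int p ^ k" using assms(1) by (auto simp: Zp_def)
  then show ?case by simp
next
  case (step N)
  have "a (Suc N) mod (int p ^ N) = a N" using assms(1) by (auto simp: Zp_def)
  moreover have "int p ^ k dvd int p ^ N" using step(1) by (simp add: le_imp_power_dvd)
  ultimately have "a (Suc N) mod int p ^ k = a N mod int p ^ k" by (metis mod_mod_cancel)
  then show ?case using step by simp
qed


theorem lemma2p6:
  fixes p m :: nat and \<xi> :: "nat \<Rightarrow> nat \<times> (nat \<Rightarrow> int)"
  assumes "prime p"
    and "\<forall>j<m. \<xi> j \<in> Qp p"
    and "(\<Sum>j<m. chi p (\<xi> j)) = 0"
  shows "p dvd m \<and> (\<forall>x\<in>Zp_units p. (\<Sum>j<m. chi p (qp_scale p x (\<xi> j))) = 0)"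
proof -
  note p = assms(1)
  have p0: "p > 0" using p prime_gt_0_nat by blast
  define k where "k j = fst (\<xi> j)" for j
  define a where "a j = snd (\<xi> j)" for j
  have aZ: "a j \<in> Zp p" if "j < m" for j
    using assms(2) that unfolding a_def by (cases "\<xi> j") (auto simp: Qp_def)
  define K where "K = Max (k ` {..<m})"
  have kK: "k j \<le> K" if "j < m" for j unfolding K_def using that by (intro Max_ge) auto
  define N where "N = Suc K"
  define b where "b j = nat (a j (k j)) * p ^ (N - k j)" for j
  define \<zeta> where "\<zeta> = cis (2 * pi / real (p * p^K))"
  have pN: "p * p^K = p ^ N" by (simp add: N_def)
  have key: "(\<zeta> ^ y) ^ b j = cis (2 * pi * real_of_int (int y * a j (k j)) / real (p ^ k j))"
    if j: "j < m" for j y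
  proof -
    have a0: "a j (k j) \<ge> 0" using aZ[OF j] by (auto simp: Zp_def)
    have kN: "k j + (N - k j) = N" using kK[OF j] by (simp add: N_def)
    have "(\<zeta> ^ y) ^ b j = cis (real (y * b j) * (2 * pi / real (p ^ N)))"
      unfolding \<zeta>_def pN power_mult[symmetric] cis_pow by (simp add: mult_ac)
    also have "real (y * b j) * (2 * pi / real (p ^ N))
        = 2 * pi * real_of_int (int y * a j (k j)) / real (p ^ k j)"
    proof -
      have "real (p ^ N) = real (p ^ k j) * real (p ^ (N - k j))"
        by (metis kN of_nat_mult power_add)
      moreover have "real (y * b j) = real_of_int (int y * a j (k j)) * real (p ^ (N - k j))"
        using a0 by (simp add: b_def)
      ultimately show ?thesis using p0 by (simp add: field_simps)
    qed
    finally show ?thesis .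
  qed
  have chi_eq: "chi p (\<xi> j) = \<zeta> ^ b j" if "j < m" for j
    using key[OF that, of 1] by (simp add: chi_def qp_frac_def k_def a_def)
  define P where "P = (\<Sum>j<m. monom (1::int) (b j))"
  have evP: "ev (\<zeta> ^ y) P = (\<Sum>j<m. (\<zeta> ^ y) ^ b j)" for y
    unfolding P_def ev_sum ev_monom ..
  have "ev \<zeta> P = 0"
    using evP[of 1] assms(3) chi_eq by simp
  moreover have "ev \<zeta> (Phi p (p^K)) = 0"
    using ev_Phi_root[OF p, of 1 K] p by (simp add: \<zeta>_def prime_nat_iff)
  ultimately obtain Q where PQ: "P = Phi p (p^K) * Q" using Phi_divides[OF p] by blast
  have "poly P 1 = int m" by (simp add: P_def poly_sum poly_monom)
  then have "int m = int p * poly Q 1" using PQ by (simp add: poly_Phi_1)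
  then have dvd: "p dvd m" by (metis dvd_triv_left of_nat_dvd_iff)
  have rest: "(\<Sum>j<m. chi p (qp_scale p x (\<xi> j))) = 0" if x: "x \<in> Zp_units p" for x
  proof -
    have xZ: "x \<in> Zp p" and x1: "x 1 \<noteq> 0" using x by (auto simp: Zp_units_def)
    define y where "y = nat (x N)"
    have xN0: "x N \<ge> 0" using xZ by (auto simp: Zp_def)
    have yN: "int y = x N" using xN0 by (simp add: y_def)
    have "\<not> p dvd y"
    proof
      assume "p dvd y"
      then have "int p dvd x N" using yN by (metis of_nat_dvd_iff)
      then have "x N mod int p = 0" by simp
      moreover have "x N mod (int p ^ 1) = x 1" by (rule Zp_mod[OF xZ]) (simp add: N_def)
      ultimately show False using x1 by simp
    qed
    then have r: "ev (\<zeta> ^ y) (Phi p (p^K)) = 0"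
      using ev_Phi_root[OF p] by (simp add: \<zeta>_def)
    have sc: "chi p (qp_scale p x (\<xi> j)) = (\<zeta> ^ y) ^ b j" if j: "j < m" for j
    proof -
      have kN: "k j \<le> N" using kK[OF j] by (simp add: N_def)
      have M0: "p ^ k j > 0" using p0 by simp
      have "chi p (qp_scale p x (\<xi> j))
          = cis (2 * pi * real_of_int ((x (k j) * a j (k j)) mod (int p ^ k j)) / real (p ^ k j))"
        by (simp add: chi_def qp_frac_def qp_scale_def zp_mult_def k_def a_def)
      also have "\<dots> = cis (2 * pi * real_of_int (int y * a j (k j)) / real (p ^ k j))"
      proof (rule cis_int_mod[OF M0])
        have "x N mod (int p ^ k j) = x (k j)" by (rule Zp_mod[OF xZ kN])
        then show "(x (k j) * a j (k j)) mod int p ^ k j mod int (p ^ k j) =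
                   int y * a j (k j) mod int (p ^ k j)"
          by (metis yN mod_mod_trivial mod_mult_left_eq of_nat_power)
      qed
      also have "\<dots> = (\<zeta> ^ y) ^ b j" using key[OF j] by simp
      finally show ?thesis .
    qed
    have "(\<Sum>j<m. chi p (qp_scale p x (\<xi> j))) = ev (\<zeta> ^ y) P"
      unfolding evP using sc by simp
    also have "\<dots> = 0" using PQ r by (simp add: ev_mult)
    finally show ?thesis .
  qed
  show ?thesis using dvd rest by blast
qed

end
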